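(* Let $\{\alpha(t)\}_{t\ge 0}$ be any non-negative, non-increasing stepsize sequence and $\eta>0$, and run the distributed regularized primal-dual algorithm described in the context. Then for every $T\in\mathbb{N}$ and every agent $i\in\{1,\dots,n\}$, \[ f(\widehat{x}_{i}(T))-f(x_{\ast})\leq \frac{1}{\sum_{t=0}^{T-1}\alpha(t)}\Bigg[\frac{1}{2}\|x_{\ast}\|^{2} +\frac{L}{n}\sum_{t=0}^{T-1}\sum_{j=1}^{n}\alpha(t)\|x_{i}(t)-x_{j}(t)\|-\frac{\eta}{2n}\sum_{t=0}^{T-1}\sum_{j=1}^{n}\alpha(t)\|\lambda_{j}(t)\|^{2} +\frac{1}{2n}\sum_{t=0}^{T-1}\sum_{j=1}^{n}\alpha^{2}(t)\Big(\|\nabla_{x}L_{j}(x_{j}(t),\lambda_{j}(t))\|^{2}+\|\nabla_{\lambda}L_{j}(x_{j}(t),\lambda_{j}(t))\|^{2}\Big)\Bigg]. \]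
   Context: Norms are Euclidean. Problem: minimize $f(x)=\frac1n\sum_{i=1}^n f_i(x)$ over $\mathcal{X}=\{x\in\mathbb{R}^d: g_k(x)\le 0,\ k=1,\dots,m\}$; write $g=(g_1,\dots,g_m)^T$. Assumptions: $\mathcal{X}$ is non-empty, convex and compact; $R$ is the smallest radius with $\mathcal{X}\subseteq \mathbb{B}_d(R)=\{x:\|x\|\le R\}$; there is a Slater vector $\tilde x$ with $g_k(\tilde x)<0$ for all $k$; all $f_i$ and $g_k$ are convex on $\mathbb{B}_d(R)$ and all their subgradients there satisfy $\|\nabla f_i(x)\|\le L$, $\|\nabla g_k(x)\|\le L$. $x_\ast$ denotes an optimal solution. Agents $1,\dots,n$ are nodes of a connected graph $G=(V,E)$; $W\in\mathbb{R}^{n\times n}$ is doubly stochastic with $W_{ij}>0$ if $(i,j)\in E$ and $W_{ij}=0$ if $(i,j)\notin E$. Regularized Lagrangian of agent $i$: $L_i(x,\lambda)=f_i(x)+\langle\lambda,g(x)\rangle-\frac{\eta}{2}\|\lambda\|^2$, with subgradients $\nabla_xL_i(x,\lambda)=\nabla f_i(x)+\sum_{k=1}^m\lambda_k\nabla g_k(x)$ and $\nabla_\lambda L_i(x,\lambda)=g(x)-\eta\lambda$ (for subgradients $\nabla f_i(x)\in\partial f_i(x)$, $\nabla g_k(x)\in\partial g_k(x)$). Algorithm: $x_i(0)=0\in\mathbb{R}^d$, $\lambda_i(0)=0\in\mathbb{R}^m$; for $t=0,1,2,\dots$: $y_i(t)=x_i(t)-\alpha(t)\nabla_xL_i(x_i(t),\lambda_i(t))$,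 $\gamma_i(t)=\lambda_i(t)+\alpha(t)\nabla_\lambda L_i(x_i(t),\lambda_i(t))$, $x_i(t+1)=\Pi_{\mathbb{B}_d(R)}(\sum_j W_{ij}y_j(t))$, $\lambda_i(t+1)=\Pi_{\mathbb{R}^m_+}(\sum_jW_{ij}\gamma_j(t))$, where $\Pi$ denotes Euclidean projection. The estimate is $\widehat{x}_i(T)=\sum_{t=0}^{T-1}\alpha(t)x_i(t)/\sum_{t=0}^{T-1}\alpha(t)$. *)

theory Defs
  imports "HOL-Analysis.Analysis"
begin

text \<open>v is a subgradient of the function h at x, relative to the set S
  (the functions are only assumed convex on S = the ball of radius R).\<close>
definition is_subgrad_on :: "'a::real_inner set \<Rightarrow> ('a \<Rightarrow> real) \<Rightarrow> 'a \<Rightarrow> 'a \<Rightarrow> bool" where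
  "is_subgrad_on S h x v \<longleftrightarrow> (\<forall>y\<in>S. h y \<ge> h x + inner v (y - x))"

definition gvec :: "('m::finite \<Rightarrow> 'a \<Rightarrow> real) \<Rightarrow> 'a \<Rightarrow> real^'m" where
  "gvec g x = (\<chi> k. g k x)"

definition gradLx :: "('n \<Rightarrow> 'a \<Rightarrow> 'a::real_vector) \<Rightarrow> ('m::finite \<Rightarrow> 'a \<Rightarrow> 'a)
    \<Rightarrow> 'n \<Rightarrow> 'a \<Rightarrow> real^'m \<Rightarrow> 'a" where
  "gradLx gf gg i x lam = gf i x + (\<Sum>k\<in>UNIV. (lam $ k) *\<^sub>R gg k x)"

definition gradLlam :: "('m::finite \<Rightarrow> 'a \<Rightarrow> real) \<Rightarrow> real \<Rightarrow> 'a \<Rightarrow> real^'m \<Rightarrow> real^'m" where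
  "gradLlam g eta x lam = gvec g x - eta *\<^sub>R lam"

definition nonneg_orthant :: "(real^'m::finite) set" where
  "nonneg_orthant = {v. \<forall>k. 0 \<le> v $ k}"

fun pd_iter :: "('n::finite \<Rightarrow> 'n \<Rightarrow> real) \<Rightarrow> (nat \<Rightarrow> real) \<Rightarrow> real \<Rightarrow> real
    \<Rightarrow> ('n \<Rightarrow> 'a \<Rightarrow> 'a::euclidean_space) \<Rightarrow> ('m::finite \<Rightarrow> 'a \<Rightarrow> real) \<Rightarrow> ('m \<Rightarrow> 'a \<Rightarrow> 'a)
    \<Rightarrow> nat \<Rightarrow> ('n \<Rightarrow> 'a) \<times> ('n \<Rightarrow> real^'m)" where
  "pd_iter W \<alpha> eta R gf g gg 0 = ((\<lambda>i. 0), (\<lambda>i. 0))"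
| "pd_iter W \<alpha> eta R gf g gg (Suc t) =
     (let x = fst (pd_iter W \<alpha> eta R gf g gg t);
          lam = snd (pd_iter W \<alpha> eta R gf g gg t);
          y = (\<lambda>i. x i - \<alpha> t *\<^sub>R gradLx gf gg i (x i) (lam i));
          \<gamma> = (\<lambda>i. lam i + \<alpha> t *\<^sub>R gradLlam g eta (x i) (lam i))
      in ((\<lambda>i. closest_point (cball 0 R) (\<Sum>j\<in>UNIV. W i j *\<^sub>R y j)),
          (\<lambda>i. closest_point nonneg_orthant (\<Sum>j\<in>UNIV. W i j *\<^sub>R \<gamma> j))))"

end

theory Submission imports Defs begin

lemma proj_le:
  fixes S :: "'a::euclidean_space set"
  assumes "convex S" "closed S" "S \<noteq> {}" "a \<in> S"
  shows "norm (closest_point S z - a) \<le> norm (z - a)"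
  using closest_point_lipschitz[OF assms(1-3), of z a] closest_point_self[OF assms(4)]
  by (simp add: dist_norm)

lemma orthant_props:
  "convex (nonneg_orthant :: (real^'m::finite) set)" "closed (nonneg_orthant :: (real^'m::finite) set)"
  "(0::real^'m) \<in> nonneg_orthant"
proof -
  show "convex (nonneg_orthant :: (real^'m::finite) set)"
    unfolding nonneg_orthant_def convex_def by (auto intro!: add_nonneg_nonneg mult_nonneg_nonneg)
  have "(nonneg_orthant :: (real^'m::finite) set) = {v. \<forall>k. v $ k \<in> {0..}}"
    unfolding nonneg_orthant_def by auto
  moreover have "closed {x::real^'m. \<forall>i. x $ i \<in> {0..}}" by (rule closed_vector_box) simp
  ultimately show "closed (nonneg_orthant :: (real^'m::finite) set)" by simp
  show "(0::real^'m) \<in> nonneg_orthant" by (simp add: nonneg_orthant_def)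
qed

lemma jensen_sq:
  fixes v :: "'b \<Rightarrow> 'a::real_normed_vector"
  assumes "finite A" "\<And>l. l \<in> A \<Longrightarrow> 0 \<le> w l" "sum w A = 1"
  shows "(norm (\<Sum>l\<in>A. w l *\<^sub>R v l))\<^sup>2 \<le> (\<Sum>l\<in>A. w l * (norm (v l))\<^sup>2)"
proof -
  have A: "A \<noteq> {}" using assms(3) by auto
  have "norm (\<Sum>l\<in>A. w l *\<^sub>R v l) \<le> (\<Sum>l\<in>A. norm (w l *\<^sub>R v l))" by (rule norm_sum)
  also have "\<dots> = (\<Sum>l\<in>A. w l * norm (v l))" using assms(2) by (intro sum.cong) auto
  finally have 1: "(norm (\<Sum>l\<in>A. w l *\<^sub>R v l))\<^sup>2 \<le> (\<Sum>l\<in>A. w l * norm (v l))\<^sup>2"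
    by (intro power_mono) auto
  have "(\<Sum>l\<in>A. w l *\<^sub>R norm (v l))\<^sup>2 \<le> (\<Sum>l\<in>A. w l * (norm (v l))\<^sup>2)"
    using convex_on_sum[OF assms(1) A convex_power2, of w "\<lambda>l. norm (v l)"] assms by auto
  with 1 show ?thesis by simp
qed

lemma sq_minus: "(norm (a - c *\<^sub>R b))\<^sup>2 = (norm a)\<^sup>2 - 2*c*inner b a + c\<^sup>2*(norm b)\<^sup>2"
  unfolding power2_norm_eq_inner by (simp add: inner_diff_left inner_diff_right algebra_simps inner_commute power2_eq_square)
lemma sq_plus: "(norm (a + c *\<^sub>R b))\<^sup>2 = (norm a)\<^sup>2 + 2*c*inner b a + c\<^sup>2*(norm b)\<^sup>2"
  unfolding power2_norm_eq_inner by (simp add: inner_add_left inner_add_right algebra_simps inner_commute power2_eq_square)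

lemma dstoch:
  fixes W :: "'n::finite \<Rightarrow> 'n \<Rightarrow> real"
  assumes "\<And>b. (\<Sum>a\<in>UNIV. W a b) = 1"
  shows "(\<Sum>j\<in>UNIV. \<Sum>l\<in>UNIV. W j l * c l) = (\<Sum>l\<in>UNIV. c l)"
  by (subst sum.swap) (simp add: sum_distrib_right[symmetric] assms)

theorem lemma1:
  fixes fs :: "'n::finite \<Rightarrow> 'a::euclidean_space \<Rightarrow> real"
    and g :: "'m::finite \<Rightarrow> 'a \<Rightarrow> real"
    and gf :: "'n \<Rightarrow> 'a \<Rightarrow> 'a" and gg :: "'m \<Rightarrow> 'a \<Rightarrow> 'a"
    and X :: "'a set" and R L eta :: real and xstar :: 'a
    and E :: "('n \<times> 'n) set" and W :: "'n \<Rightarrow> 'n \<Rightarrow> real"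
    and \<alpha> :: "nat \<Rightarrow> real" and T :: nat and i :: 'n
  defines "f \<equiv> (\<lambda>x. (1 / real CARD('n)) * (\<Sum>j\<in>UNIV. fs j x))"
  defines "xs \<equiv> (\<lambda>t. fst (pd_iter W \<alpha> eta R gf g gg t))"
  defines "lams \<equiv> (\<lambda>t. snd (pd_iter W \<alpha> eta R gf g gg t))"
  assumes X_def: "X = {x. \<forall>k. g k x \<le> 0}"
    and X_nonempty: "X \<noteq> {}" and X_convex: "convex X" and X_compact: "compact X"
    and R_def: "R = Sup (norm ` X)"
    and slater: "\<exists>xt. \<forall>k. g k xt < 0"
    and f_convex: "\<And>j. convex_on (cball 0 R) (fs j)"
    and g_convex: "\<And>k. convex_on (cball 0 R) (g k)"
    and gf_subgrad: "\<And>j x. x \<in> cball 0 R \<Longrightarrow> is_subgrad_on (cball 0 R) (fs j) x (gf j x)"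
    and gg_subgrad: "\<And>k x. x \<in> cball 0 R \<Longrightarrow> is_subgrad_on (cball 0 R) (g k) x (gg k x)"
    and gf_bound: "\<And>j x. x \<in> cball 0 R \<Longrightarrow> norm (gf j x) \<le> L"
    and gg_bound: "\<And>k x. x \<in> cball 0 R \<Longrightarrow> norm (gg k x) \<le> L"
    and xstar_opt: "xstar \<in> X" "\<And>x. x \<in> X \<Longrightarrow> f xstar \<le> f x"
    and E_sym: "sym E" and E_conn: "\<And>a b. (a, b) \<in> E\<^sup>*"
    and W_nonneg: "\<And>a b. 0 \<le> W a b"
    and W_rows: "\<And>a. (\<Sum>b\<in>UNIV. W a b) = 1"
    and W_cols: "\<And>b. (\<Sum>a\<in>UNIV. W a b) = 1"
    and W_pos: "\<And>a b. (a, b) \<in> E \<Longrightarrow> W a b > 0"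
    and W_zero: "\<And>a b. (a, b) \<notin> E \<Longrightarrow> W a b = 0"
    and alpha_nonneg: "\<And>t. 0 \<le> \<alpha> t"
    and alpha_noninc: "\<And>t. \<alpha> (Suc t) \<le> \<alpha> t"
    and eta_pos: "eta > 0"
    and alpha_sum_pos: "(\<Sum>t<T. \<alpha> t) > 0"
  shows "f ((1 / (\<Sum>t<T. \<alpha> t)) *\<^sub>R (\<Sum>t<T. \<alpha> t *\<^sub>R xs t i)) - f xstar
    \<le> (1 / (\<Sum>t<T. \<alpha> t)) *
       ((1/2) * (norm xstar)\<^sup>2
        + (L / real CARD('n)) * (\<Sum>t<T. \<Sum>j\<in>UNIV. \<alpha> t * norm (xs t i - xs t j))
        - (eta / (2 * real CARD('n))) * (\<Sum>t<T. \<Sum>j\<in>UNIV. \<alpha> t * (norm (lams t j))\<^sup>2)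
        + (1 / (2 * real CARD('n))) * (\<Sum>t<T. \<Sum>j\<in>UNIV. (\<alpha> t)\<^sup>2 *
             ((norm (gradLx gf gg j (xs t j) (lams t j)))\<^sup>2
              + (norm (gradLlam g eta (xs t j) (lams t j)))\<^sup>2)))"
proof -
  let ?n = "real CARD('n)"
  define A where "A = (\<Sum>t<T. \<alpha> t)"
  define gx where "gx t j = gradLx gf gg j (xs t j) (lams t j)" for t j
  define gl where "gl t j = gradLlam g eta (xs t j) (lams t j)" for t j
  define D where "D t = (\<Sum>j\<in>UNIV. (norm (xs t j - xstar))\<^sup>2 + (norm (lams t j))\<^sup>2)" for t
  have npos: "?n > 0" by simp
  have "bounded X" using X_compact compact_imp_bounded by blast
  then obtain B where B: "\<And>x. x \<in> X \<Longrightarrow> norm x \<le> B" unfolding bounded_iff by blast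
  have xsR: "norm xstar \<le> R" unfolding R_def
    by (rule cSup_upper) (use xstar_opt(1) B in \<open>auto intro!: bdd_aboveI2[where M=B]\<close>)
  have R0: "0 \<le> R" using xsR norm_ge_zero order_trans by blast
  have xstarB: "xstar \<in> cball 0 R" using xsR by simp
  have cb: "convex (cball (0::'a) R)" "closed (cball (0::'a) R)" "cball (0::'a) R \<noteq> {}"
    using R0 by auto
  have xs_Suc: "xs (Suc t) j = closest_point (cball 0 R) (\<Sum>l\<in>UNIV. W j l *\<^sub>R (xs t l - \<alpha> t *\<^sub>R gx t l))" for t j
    by (simp add: xs_def lams_def gx_def Let_def)
  have lams_Suc: "lams (Suc t) j = closest_point nonneg_orthant (\<Sum>l\<in>UNIV. W j l *\<^sub>R (lams t l + \<alpha> t *\<^sub>R gl t l))" for t j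
    by (simp add: xs_def lams_def gl_def Let_def)
  have xs0: "xs 0 j = 0" for j by (simp add: xs_def)
  have lams0: "lams 0 j = 0" for j by (simp add: lams_def)
  have xsin: "xs t j \<in> cball 0 R" for t j
    using closest_point_in_set[OF cb(2,3)] by (cases t) (auto simp: xs0 xs_Suc R0 simp del: mem_cball)
  have lamsin: "lams t j \<in> nonneg_orthant" for t j
    using orthant_props by (cases t) (auto simp: lams0 lams_Suc intro: closest_point_in_set)
  have lams_nn: "0 \<le> lams t j $ k" for t j k using lamsin[of t j] unfolding nonneg_orthant_def by auto
  have gstar: "g k xstar \<le> 0" for k using xstar_opt(1) X_def by auto
  have perj: "(norm (xs t j - \<alpha> t *\<^sub>R gx t j - xstar))\<^sup>2 + (norm (lams t j + \<alpha> t *\<^sub>R gl t j))\<^sup>2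
     \<le> (norm (xs t j - xstar))\<^sup>2 + (norm (lams t j))\<^sup>2 - 2*\<alpha> t*(fs j (xs t j) - fs j xstar)
        - 2*\<alpha> t*eta*(norm (lams t j))\<^sup>2 + (\<alpha> t)\<^sup>2*((norm (gx t j))\<^sup>2 + (norm (gl t j))\<^sup>2)" for t j
  proof -
    define x where "x = xs t j"
    define l where "l = lams t j"
    have sub1: "inner (gx t j) (x - xstar) \<ge> fs j x - fs j xstar + (\<Sum>k\<in>UNIV. l$k * (g k x - g k xstar))"
    proof -
      have "fs j xstar \<ge> fs j x + inner (gf j x) (xstar - x)"
        using gf_subgrad[OF xsin[of t j]] xstarB unfolding is_subgrad_on_def x_def by blast
      then have a: "inner (gf j x) (x - xstar) \<ge> fs j x - fs j xstar" by (simp add: inner_diff_right)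
      have b: "l$k * (g k x - g k xstar) \<le> l$k * inner (gg k x) (x - xstar)" for k
      proof -
        have "g k xstar \<ge> g k x + inner (gg k x) (xstar - x)"
          using gg_subgrad[OF xsin[of t j]] xstarB unfolding is_subgrad_on_def x_def by blast
        then have "g k x - g k xstar \<le> inner (gg k x) (x - xstar)" by (simp add: inner_diff_right)
        then show ?thesis using lams_nn[of t j k] unfolding l_def by (rule mult_left_mono)
      qed
      have "inner (gx t j) (x - xstar) = inner (gf j x) (x - xstar) + (\<Sum>k\<in>UNIV. l$k * inner (gg k x) (x - xstar))"
        by (simp add: gx_def gradLx_def inner_add_left inner_sum_left x_def l_def)
      moreover have "(\<Sum>k\<in>UNIV. l$k * (g k x - g k xstar)) \<le> (\<Sum>k\<in>UNIV. l$k * inner (gg k x) (x - xstar))"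
        by (rule sum_mono) (rule b)
      ultimately show ?thesis using a by linarith
    qed
    have gv: "inner (gvec g x) l = (\<Sum>k\<in>UNIV. l$k * g k x)"
      by (simp add: gvec_def inner_vec_def mult.commute)
    have lam1: "inner (gl t j) l = (\<Sum>k\<in>UNIV. l$k * g k x) - eta * (norm l)\<^sup>2"
      proof -
      have "gl t j = gvec g x - eta *\<^sub>R l" by (simp add: gl_def gradLlam_def x_def l_def)
      then show ?thesis by (simp add: inner_diff_left gv power2_norm_eq_inner)
    qed
    have neg: "(\<Sum>k\<in>UNIV. l$k * g k xstar) \<le> 0"
      by (rule sum_nonpos) (simp add: mult_nonneg_nonpos lams_nn gstar l_def)
    have split: "(\<Sum>k\<in>UNIV. l$k * (g k x - g k xstar)) = (\<Sum>k\<in>UNIV. l$k * g k x) - (\<Sum>k\<in>UNIV. l$k * g k xstar)"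
      by (simp add: right_diff_distrib sum_subtractf)
    have e1: "(norm (x - \<alpha> t *\<^sub>R gx t j - xstar))\<^sup>2 = (norm (x - xstar))\<^sup>2 - 2*\<alpha> t*inner (gx t j) (x - xstar) + (\<alpha> t)\<^sup>2*(norm (gx t j))\<^sup>2"
      using sq_minus[of "x - xstar" "\<alpha> t" "gx t j"] by (simp add: algebra_simps)
    have e2: "(norm (l + \<alpha> t *\<^sub>R gl t j))\<^sup>2 = (norm l)\<^sup>2 + 2*\<alpha> t*inner (gl t j) l + (\<alpha> t)\<^sup>2*(norm (gl t j))\<^sup>2"
      by (rule sq_plus)
    have c1: "\<alpha> t * inner (gx t j) (x - xstar) \<ge> \<alpha> t * (fs j x - fs j xstar + (\<Sum>k\<in>UNIV. l$k * (g k x - g k xstar)))"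
      using sub1 alpha_nonneg by (rule mult_left_mono)
    have c2: "\<alpha> t * (\<Sum>k\<in>UNIV. l$k * g k xstar) \<le> 0"
      using neg alpha_nonneg by (simp add: mult_nonneg_nonpos)
    show ?thesis unfolding x_def[symmetric] l_def[symmetric] e1 e2 lam1
      using c1 c2 unfolding split by (simp add: algebra_simps)
  qed
  have dst: "(\<Sum>j\<in>UNIV. \<Sum>l\<in>UNIV. W j l * c l) = (\<Sum>l\<in>UNIV. c l)" for c
    by (rule dstoch) (rule W_cols)
  have "norm (gf i 0) \<le> L" using gf_bound[of 0 i] R0 by simp
  then have Lnn: "0 \<le> L" using norm_ge_zero[of "gf i 0"] by linarith
  have lip: "fs j (xs t j) \<ge> fs j (xs t i) - L * norm (xs t i - xs t j)" for t j
  proof -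
    have "fs j (xs t j) \<ge> fs j (xs t i) + inner (gf j (xs t i)) (xs t j - xs t i)"
      using gf_subgrad[OF xsin[of t i]] xsin[of t j] unfolding is_subgrad_on_def by blast
    moreover have "\<bar>inner (gf j (xs t i)) (xs t j - xs t i)\<bar> \<le> norm (gf j (xs t i)) * norm (xs t j - xs t i)"
      by (rule Cauchy_Schwarz_ineq2)
    moreover have "norm (gf j (xs t i)) * norm (xs t j - xs t i) \<le> L * norm (xs t i - xs t j)"
      using gf_bound[OF xsin[of t i]] by (simp add: norm_minus_commute mult_right_mono)
    ultimately show ?thesis by linarith
  qed
  have step: "D (Suc t) \<le> D t - 2*\<alpha> t*(\<Sum>j\<in>UNIV. fs j (xs t i) - fs j xstar)
      + 2*L*(\<Sum>j\<in>UNIV. \<alpha> t * norm (xs t i - xs t j))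
      - 2*eta*(\<Sum>j\<in>UNIV. \<alpha> t * (norm (lams t j))\<^sup>2)
      + (\<Sum>j\<in>UNIV. (\<alpha> t)\<^sup>2 * ((norm (gx t j))\<^sup>2 + (norm (gl t j))\<^sup>2))" for t
  proof -
    define Nx where "Nx l = (norm (xs t l - \<alpha> t *\<^sub>R gx t l - xstar))\<^sup>2" for l
    define Nl where "Nl l = (norm (lams t l + \<alpha> t *\<^sub>R gl t l))\<^sup>2" for l
    have px: "(norm (xs (Suc t) j - xstar))\<^sup>2 \<le> (\<Sum>l\<in>UNIV. W j l * Nx l)" for j
    proof -
      have "norm (xs (Suc t) j - xstar) \<le> norm ((\<Sum>l\<in>UNIV. W j l *\<^sub>R (xs t l - \<alpha> t *\<^sub>R gx t l)) - xstar)"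
        unfolding xs_Suc by (rule proj_le[OF cb xstarB])
      also have "(\<Sum>l\<in>UNIV. W j l *\<^sub>R (xs t l - \<alpha> t *\<^sub>R gx t l)) - xstar
          = (\<Sum>l\<in>UNIV. W j l *\<^sub>R (xs t l - \<alpha> t *\<^sub>R gx t l - xstar))"
        by (simp add: scaleR_diff_right sum_subtractf scaleR_sum_left[symmetric] W_rows)
      finally have "(norm (xs (Suc t) j - xstar))\<^sup>2 \<le> (norm (\<Sum>l\<in>UNIV. W j l *\<^sub>R (xs t l - \<alpha> t *\<^sub>R gx t l - xstar)))\<^sup>2"
        by (intro power_mono) auto
      also have "\<dots> \<le> (\<Sum>l\<in>UNIV. W j l * Nx l)" unfolding Nx_def
        by (rule jensen_sq) (auto simp: W_nonneg W_rows)
      finally show ?thesis .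
    qed
    have pl: "(norm (lams (Suc t) j))\<^sup>2 \<le> (\<Sum>l\<in>UNIV. W j l * Nl l)" for j
    proof -
      have "norm (lams (Suc t) j - 0) \<le> norm ((\<Sum>l\<in>UNIV. W j l *\<^sub>R (lams t l + \<alpha> t *\<^sub>R gl t l)) - 0)"
        unfolding lams_Suc using orthant_props by (intro proj_le) auto
      then have "(norm (lams (Suc t) j))\<^sup>2 \<le> (norm (\<Sum>l\<in>UNIV. W j l *\<^sub>R (lams t l + \<alpha> t *\<^sub>R gl t l)))\<^sup>2"
        by (intro power_mono) auto
      also have "\<dots> \<le> (\<Sum>l\<in>UNIV. W j l * Nl l)" unfolding Nl_def
        by (rule jensen_sq) (auto simp: W_nonneg W_rows)
      finally show ?thesis .
    qed
    have "D (Suc t) \<le> (\<Sum>j\<in>UNIV. (\<Sum>l\<in>UNIV. W j l * Nx l) + (\<Sum>l\<in>UNIV. W j l * Nl l))"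
      unfolding D_def by (rule sum_mono) (intro add_mono px pl)
    also have "\<dots> = (\<Sum>l\<in>UNIV. Nx l + Nl l)"
      by (simp add: sum.distrib dst)
    also have "\<dots> \<le> (\<Sum>l\<in>UNIV. ((norm (xs t l - xstar))\<^sup>2 + (norm (lams t l))\<^sup>2)
          - 2*\<alpha> t*(fs l (xs t i) - fs l xstar) + 2*L*(\<alpha> t * norm (xs t i - xs t l))
          - 2*eta*(\<alpha> t * (norm (lams t l))\<^sup>2) + (\<alpha> t)\<^sup>2 * ((norm (gx t l))\<^sup>2 + (norm (gl t l))\<^sup>2))"
    proof (rule sum_mono)
      fix l
      have "\<alpha> t * fs l (xs t l) \<ge> \<alpha> t * (fs l (xs t i) - L * norm (xs t i - xs t l))"
        using lip alpha_nonneg by (rule mult_left_mono)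
      then show "Nx l + Nl l \<le> ((norm (xs t l - xstar))\<^sup>2 + (norm (lams t l))\<^sup>2)
          - 2*\<alpha> t*(fs l (xs t i) - fs l xstar) + 2*L*(\<alpha> t * norm (xs t i - xs t l))
          - 2*eta*(\<alpha> t * (norm (lams t l))\<^sup>2) + (\<alpha> t)\<^sup>2 * ((norm (gx t l))\<^sup>2 + (norm (gl t l))\<^sup>2)"
        using perj[of t l] unfolding Nx_def Nl_def by (simp add: algebra_simps)
    qed
    also have "\<dots> = D t - 2*\<alpha> t*(\<Sum>j\<in>UNIV. fs j (xs t i) - fs j xstar)
      + 2*L*(\<Sum>j\<in>UNIV. \<alpha> t * norm (xs t i - xs t j))
      - 2*eta*(\<Sum>j\<in>UNIV. \<alpha> t * (norm (lams t j))\<^sup>2)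
      + (\<Sum>j\<in>UNIV. (\<alpha> t)\<^sup>2 * ((norm (gx t j))\<^sup>2 + (norm (gl t j))\<^sup>2))"
      unfolding D_def by (simp add: sum.distrib sum_subtractf sum_distrib_left right_diff_distrib)
    finally show ?thesis .
  qed
  define Q where "Q t = 2*\<alpha> t*(\<Sum>j\<in>UNIV. fs j (xs t i) - fs j xstar)
      - 2*L*(\<Sum>j\<in>UNIV. \<alpha> t * norm (xs t i - xs t j))
      + 2*eta*(\<Sum>j\<in>UNIV. \<alpha> t * (norm (lams t j))\<^sup>2)
      - (\<Sum>j\<in>UNIV. (\<alpha> t)\<^sup>2 * ((norm (gx t j))\<^sup>2 + (norm (gl t j))\<^sup>2))" for t
  have tele: "D N \<le> D 0 - (\<Sum>t<N. Q t)" for N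
  proof (induction N)
    case 0 then show ?case by simp
  next
    case (Suc N)
    have "D (Suc N) \<le> D N - Q N" using step[of N] unfolding Q_def by linarith
    with Suc show ?case by simp
  qed
  have D0: "D 0 = ?n * (norm xstar)\<^sup>2" by (simp add: D_def xs0 lams0)
  have DT: "D T \<ge> 0" unfolding D_def by (intro sum_nonneg) auto
  have fsum: "(\<Sum>j\<in>UNIV. fs j y - fs j xstar) = ?n * (f y - f xstar)" for y
    by (simp add: f_def sum_subtractf algebra_simps)
  define P where "P = (\<Sum>t<T. \<alpha> t * (f (xs t i) - f xstar))"
  define C where "C = (\<Sum>t<T. \<Sum>j\<in>UNIV. \<alpha> t * norm (xs t i - xs t j))"
  define M where "M = (\<Sum>t<T. \<Sum>j\<in>UNIV. \<alpha> t * (norm (lams t j))\<^sup>2)"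
  define S where "S = (\<Sum>t<T. \<Sum>j\<in>UNIV. (\<alpha> t)\<^sup>2 * ((norm (gx t j))\<^sup>2 + (norm (gl t j))\<^sup>2))"
  have sumQ: "(\<Sum>t<T. Q t) = 2 * ?n * P - 2*L*C + 2*eta*M - S"
    unfolding Q_def P_def C_def M_def S_def fsum
    by (simp add: sum.distrib sum_subtractf sum_distrib_left algebra_simps)
  have Mnn: "M \<ge> 0" unfolding M_def using alpha_nonneg by (intro sum_nonneg mult_nonneg_nonneg) auto
  have main: "2 * ?n * P \<le> ?n * (norm xstar)\<^sup>2 + 2*L*C - 2*eta*M + S"
    using tele[of T] D0 DT sumQ by linarith
  have Pb: "P \<le> (1/2) * (norm xstar)\<^sup>2 + (L / ?n) * C - (eta / (2 * ?n)) * M + (1 / (2 * ?n)) * S"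
  proof -
    have "eta * M / ?n \<ge> 0" using Mnn eta_pos by simp
    have "P \<le> (?n * (norm xstar)\<^sup>2 + 2*L*C - 2*eta*M + S) / (2 * ?n)"
      using main npos by (subst pos_le_divide_eq) (auto simp: algebra_simps)
    also have "(?n * (norm xstar)\<^sup>2 + 2*L*C - 2*eta*M + S) / (2 * ?n)
        = (1/2) * (norm xstar)\<^sup>2 + (L / ?n) * C - (eta / ?n) * M + (1 / (2 * ?n)) * S"
      using npos by (simp add: field_simps)
    finally have "P \<le> (1/2) * (norm xstar)\<^sup>2 + (L / ?n) * C - (eta / ?n) * M + (1 / (2 * ?n)) * S" .
    moreover have "(eta / ?n) * M \<ge> (eta / (2 * ?n)) * M"
      using Mnn eta_pos npos by (intro mult_right_mono) (auto simp: divide_simps)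
    ultimately show ?thesis by linarith
  qed
  have Apos: "A > 0" using alpha_sum_pos A_def by simp
  have Tne: "{..<T} \<noteq> {}" using alpha_sum_pos by auto
  define xh where "xh = (1 / A) *\<^sub>R (\<Sum>t<T. \<alpha> t *\<^sub>R xs t i)"
  have xh2: "xh = (\<Sum>t<T. (\<alpha> t / A) *\<^sub>R xs t i)" by (simp add: xh_def scaleR_sum_right)
  have wsum: "(\<Sum>t<T. \<alpha> t / A) = 1" using Apos by (simp add: sum_divide_distrib[symmetric] A_def)
  have jf: "fs j xh \<le> (\<Sum>t<T. (\<alpha> t / A) * fs j (xs t i))" for j
    unfolding xh2 using Apos alpha_nonneg xsin
    by (intro convex_on_sum[OF finite_lessThan Tne f_convex wsum]) auto
  have "f xh \<le> (1 / ?n) * (\<Sum>j\<in>UNIV. \<Sum>t<T. (\<alpha> t / A) * fs j (xs t i))"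
    unfolding f_def using npos by (intro mult_left_mono sum_mono jf) auto
  also have "\<dots> = (\<Sum>t<T. (\<alpha> t / A) * f (xs t i))"
    by (subst sum.swap) (simp add: f_def sum_distrib_left algebra_simps)
  finally have "f xh \<le> (\<Sum>t<T. (\<alpha> t / A) * f (xs t i))" .
  then have "A * f xh \<le> A * (\<Sum>t<T. (\<alpha> t / A) * f (xs t i))" using Apos by simp
  also have "\<dots> = (\<Sum>t<T. \<alpha> t * f (xs t i))" using Apos by (simp add: sum_distrib_left)
  finally have "A * (f xh - f xstar) \<le> P"
    unfolding P_def by (simp add: algebra_simps sum_subtractf sum_distrib_right[symmetric] A_def)
  with Pb have fin: "A * (f xh - f xstar) \<le> (1/2) * (norm xstar)\<^sup>2 + (L / ?n) * C - (eta / (2 * ?n)) * M + (1 / (2 * ?n)) * S"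
    by linarith
  show ?thesis
    unfolding xh_def[symmetric] A_def[symmetric] C_def[symmetric] M_def[symmetric]
      S_def[unfolded gx_def gl_def, symmetric]
    using fin Apos by (simp add: field_simps)
qed

end
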